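(* In the setting of the context (in any of the cases for the sign of $\partial_v r_-$), every radially outgoing null geodesic that is initially located outside or on the outer AH never intersects the outer AH at any later time, and reaches future null infinity, i.e. $x(v)\to\infty$ as $v\to\infty$.
   Context: Spherically symmetric spacetime $ds^2=-f(v,r)A(v,r)^2dv^2+2A(v,r)\,dr\,dv+r^2d\Omega^2$ with $A>0$, $f,A\to1$ as $r\to\infty$, $f(v,0)=1$, $\partial_rf(v,0)=\partial_rA(v,0)=0$; $f(v,\cdot)$ has exactly two zeros $r_+(v)>r_-(v)$ (outer/inner apparent horizons, AHs), $f=F(r-r_+)(r-r_-)$ with $F>0$, and $h=AF>0$. Assumptions: $\partial_v r_+<0$; $r_\pm(v)\to r_c$ as $v\to\infty$; the sign of $\partial_v r_-$ is constant; the $v\to\infty$ limits of $A,F,h$ behave as analytic functions of $r$, so all $\partial_r^n h$ converge as $v\to\infty$ (write $h(\infty,x)$ for the limit). With $x=r-r_c$, $x_\pm=r_\pm-r_c$ and $h$ regarded as a function of $(v,x)$, radially outgoing null geodesics are the solutions of $dx/dv=\tfrac12h(v,x)(x-x_+(v))(x-x_-(v))$. *)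

theory Defs
  imports "HOL-Analysis.Analysis"
begin

definition real_analytic_on :: "(real \<Rightarrow> real) \<Rightarrow> real set \<Rightarrow> bool" where
  "real_analytic_on f S \<longleftrightarrow>
     (\<forall>y\<in>S. \<exists>r>0. \<exists>a::nat \<Rightarrow> real. \<forall>x. \<bar>x - y\<bar> < r \<longrightarrow> (\<lambda>n. a n * (x - y) ^ n) sums f x)"

end

theory Submission
  imports Defs
begin

theorem lemma1:
  fixes h :: "real \<Rightarrow> real \<Rightarrow> real"    (* h(v,x) *)
    and hinf :: "real \<Rightarrow> real"            (* h(\<infinity>,x) *)
    and xp xm xp' xm' :: "real \<Rightarrow> real"   (* x_+, x_- and their v-derivatives *)
    and rc :: real
    and x :: "real \<Rightarrow> real"                (* the outgoing null geodesic *)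
    and v0 :: real
  assumes h_pos: "\<And>v y. y > - rc \<Longrightarrow> h v y > 0"
    and h_smooth: "\<And>v n y. y > - rc \<Longrightarrow> (deriv ^^ n) (h v) differentiable (at y)"
    and h_lim: "\<And>n y. y > - rc \<Longrightarrow>
        ((\<lambda>(v, z). (deriv ^^ n) (h v) z) \<longlongrightarrow> (deriv ^^ n) hinf y) (at_top \<times>\<^sub>F nhds y)"
    and hinf_analytic: "real_analytic_on hinf {y. y > - rc}"
    and hinf_pos: "\<And>y. y > - rc \<Longrightarrow> hinf y > 0"
    and xm_pos: "\<And>v. xm v > - rc"
    and xm_lt_xp: "\<And>v. xm v < xp v"
    and xp_deriv: "\<And>v. (xp has_real_derivative xp' v) (at v)"
    and xp_decr: "\<And>v. xp' v < 0"
    and xm_deriv: "\<And>v. (xm has_real_derivative xm' v) (at v)"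
    and xm_sign: "(\<forall>v. xm' v > 0) \<or> (\<forall>v. xm' v < 0) \<or> (\<forall>v. xm' v = 0)"
    and xp_lim: "(xp \<longlongrightarrow> 0) at_top"
    and xm_lim: "(xm \<longlongrightarrow> 0) at_top"
    and geod: "\<And>v. v \<ge> v0 \<Longrightarrow>
        (x has_real_derivative (1/2) * h v (x v) * (x v - xp v) * (x v - xm v)) (at v within {v0..})"
    and init: "x v0 \<ge> xp v0"
  shows "(\<forall>v>v0. x v \<noteq> xp v) \<and> filterlim x at_top at_top"
proof -
  define D where "D v = (1/2) * h v (x v) * (x v - xp v) * (x v - xm v)" for v
  define g where "g v = x v - xp v" for v
  have dx: "(x has_real_derivative D v) (at v)" if "v > v0" for v
  proof -
    have "(x has_real_derivative D v) (at v within {v0<..})"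
      using has_field_derivative_subset[OF geod[of v], of "{v0<..}"] that unfolding D_def
      by (simp add: subset_eq)
    thus ?thesis using at_within_open[of v "{v0<..}"] that by simp
  qed
  have dgw: "(g has_real_derivative D v - xp' v) (at v within {v0..})" if "v \<ge> v0" for v
    unfolding g_def D_def
    by (intro derivative_intros geod that has_field_derivative_at_within[OF xp_deriv])
  have dg: "(g has_real_derivative D v - xp' v) (at v)" if "v > v0" for v
    unfolding g_def by (intro derivative_intros dx that xp_deriv)
  have contx: "continuous_on {v0..} x"
    unfolding continuous_on_eq_continuous_within
  proof
    fix v assume "v \<in> {v0..}"
    thus "continuous (at v within {v0..}) x" using geod[of v] DERIV_continuous by auto
  qed
  have contg: "continuous_on {v0..} g"
    unfolding g_def using contx xp_deriv
    by (intro continuous_intros) (auto intro: continuous_at_imp_continuous_on DERIV_isCont)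
  have Dzero: "g v = 0 \<Longrightarrow> D v - xp' v > 0" for v
    using xp_decr[of v] unfolding D_def g_def by simp
  have g0: "g v0 \<ge> 0" using init unfolding g_def by simp
  obtain \<delta> where \<delta>: "\<delta> > 0" "\<And>t. v0 < t \<Longrightarrow> t < v0 + \<delta> \<Longrightarrow> g t > 0"
  proof (cases "g v0 = 0")
    case True
    from has_real_derivative_pos_inc_right[OF dgw[of v0] Dzero[OF True]]
    obtain d where d: "d > 0" "\<And>hh. hh > 0 \<Longrightarrow> v0 + hh \<in> {v0..} \<Longrightarrow> hh < d \<Longrightarrow> g v0 < g (v0 + hh)"
      by auto
    show ?thesis
    proof (rule that[OF d(1)])
      fix t assume "v0 < t" "t < v0 + d"
      with d(2)[of "t - v0"] True show "g t > 0" by auto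
    qed
  next
    case False
    hence gp: "g v0 > 0" using g0 by simp
    have "continuous (at v0 within {v0..}) g"
      using contg by (simp add: continuous_on_eq_continuous_within)
    then obtain d where d: "d > 0" "\<And>t. t \<in> {v0..} \<Longrightarrow> dist t v0 < d \<Longrightarrow> dist (g t) (g v0) < g v0"
      using gp unfolding continuous_within_eps_delta by metis
    show ?thesis
    proof (rule that[OF d(1)])
      fix t assume "v0 < t" "t < v0 + d"
      with d(2)[of t] show "g t > 0" by (auto simp: dist_real_def)
    qed
  qed
  have gpos: "g v > 0" if "v > v0" for v
  proof (rule ccontr)
    assume "\<not> g v > 0"
    hence gv: "g v \<le> 0" by simp
    define a where "a = v0 + min \<delta> (v - v0) / 2"
    have a: "v0 < a" "a < v0 + \<delta>" "a < v" unfolding a_def using \<delta>(1) that by (auto simp: min_def field_simps)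
    define S where "S = {a..v} \<inter> g -` {..0}"
    have clS: "closed S" unfolding S_def
      by (intro continuous_closed_preimage continuous_on_subset[OF contg]) (use a in auto)
    have "v \<in> S" unfolding S_def using a gv by auto
    hence ne: "S \<noteq> {}" by auto
    have bb: "bdd_below S" unfolding S_def by (auto intro: bdd_belowI[of _ a])
    define s where "s = Inf S"
    have sS: "s \<in> S" unfolding s_def using closed_contains_Inf[OF ne bb clS] .
    have gas: "g a > 0" using \<delta>(2)[of a] a by auto
    have s1: "a \<le> s" "s \<le> v" "g s \<le> 0" using sS unfolding S_def by auto
    have as: "a < s" using s1 gas by (cases "a = s") auto
    have between: "g t > 0" if "v0 < t" "t < s" for t
    proof (cases "t < a")
      case True thus ?thesis using \<delta>(2)[of t] that a by auto
    next
      case False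
      have "t \<notin> S"
      proof
        assume "t \<in> S"
        hence "s \<le> t" unfolding s_def using bb by (simp add: cInf_lower)
        thus False using that by simp
      qed
      thus ?thesis using False that s1 unfolding S_def by auto
    qed
    have sv0: "s > v0" using as a by simp
    have gs0: "g s = 0"
    proof (rule ccontr)
      assume "g s \<noteq> 0"
      hence neg: "g s < 0" using s1 by simp
      have "isCont g s" using dg[OF sv0] by (rule DERIV_isCont)
      then obtain d where d: "d > 0" "\<And>t. dist t s < d \<Longrightarrow> dist (g t) (g s) < - g s"
        using neg unfolding continuous_at_eps_delta by (metis neg_0_less_iff_less)
      define t where "t = s - min d (s - v0) / 2"
      have "v0 < t" "t < s" "dist t s < d" unfolding t_def using d(1) sv0 by (auto simp: dist_real_def min_def field_simps)
      hence "g t > 0" "g t < 0" using between d(2)[of t] by (auto simp: dist_real_def)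
      thus False by simp
    qed
    from DERIV_pos_inc_left[OF dg[OF sv0] Dzero[OF gs0]]
    obtain d where d: "d > 0" "\<And>hh. hh > 0 \<Longrightarrow> hh < d \<Longrightarrow> g (s - hh) < g s" by auto
    define hh where "hh = min d (s - v0) / 2"
    have "hh > 0" "hh < d" "v0 < s - hh" "s - hh < s" unfolding hh_def using d(1) sv0 by (auto simp: min_def field_simps)
    hence "g (s - hh) < 0" "g (s - hh) > 0" using d(2)[of hh] gs0 between[of "s - hh"] by auto
    thus False by simp
  qed
  have part1: "\<forall>v>v0. x v \<noteq> xp v" using gpos unfolding g_def by fastforce
  have xp_nonneg: "xp w \<ge> 0" for w
  proof -
    have "\<forall>\<^sub>F t in at_top. xp t \<le> xp w"
    proof (rule eventually_at_top_linorderI[of w])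
      fix t assume "t \<ge> w"
      thus "xp t \<le> xp w"
        using DERIV_neg_imp_decreasing[of w t xp] xp_deriv xp_decr
        by (cases "t = w") (auto, meson less_eq_real_def)
    qed
    thus ?thesis using tendsto_upperbound[OF xp_lim] by auto
  qed
  have xp_pos: "xp w > 0" for w
    using DERIV_neg_imp_decreasing[of w "w+1" xp] xp_deriv xp_decr xp_nonneg[of "w+1"]
    by fastforce
  have xbig: "x v > xp v" "x v > xm v" "x v > - rc" "x v > 0" if "v > v0" for v
    using gpos[OF that] xm_lt_xp[of v] xm_pos[of v] xp_pos[of v] unfolding g_def by auto
  have Dpos: "D v > 0" if "v > v0" for v
    using xbig[OF that] h_pos[OF xbig(3)[OF that]] unfolding D_def by simp
  have xmono: "x a \<le> x b" if "v0 < a" "a \<le> b" for a b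
  proof (cases "a = b")
    case False
    hence "a < b" using that by simp
    have "x a < x b"
    proof (rule DERIV_pos_imp_increasing[OF \<open>a < b\<close>])
      fix t assume "a \<le> t" "t \<le> b"
      hence "v0 < t" using that by simp
      thus "\<exists>y. (x has_real_derivative y) (at t) \<and> 0 < y" using dx Dpos by blast
    qed
    thus ?thesis by simp
  qed simp
  have part2: "filterlim x at_top at_top"
  proof (rule ccontr)
    assume nl: "\<not> filterlim x at_top at_top"
    then obtain Z where Z: "\<not> (\<forall>\<^sub>F t in at_top. Z \<le> x t)"
      unfolding filterlim_at_top by blast
    have bnd: "x v \<le> Z" if "v > v0" for v
    proof (rule ccontr)
      assume "\<not> x v \<le> Z"
      hence "\<forall>\<^sub>F t in at_top. Z \<le> x t"
        using xmono[OF that] by (intro eventually_at_top_linorderI[of v]) force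
      thus False using Z by simp
    qed
    define L where "L = Sup (x ` {v0<..})"
    have ne: "x ` {v0<..} \<noteq> {}" by auto
    have bda: "bdd_above (x ` {v0<..})" using bnd by (auto intro: bdd_aboveI[of _ Z])
    have leL: "x v \<le> L" if "v > v0" for v
      unfolding L_def using bda that by (auto intro: cSup_upper)
    have xL: "(x \<longlongrightarrow> L) at_top"
    proof (rule order_tendstoI)
      fix a assume "a < L"
      then obtain v where v: "v > v0" "a < x v"
        unfolding L_def using less_cSup_iff[OF ne bda] by auto
      show "\<forall>\<^sub>F t in at_top. a < x t"
        using xmono[OF v(1)] v by (intro eventually_at_top_linorderI[of v]) force
    next
      fix a assume "a > L"
      show "\<forall>\<^sub>F t in at_top. x t < a"
        using leL \<open>a > L\<close> by (intro eventually_at_top_linorderI[of "v0+1"]) (meson le_less_trans less_add_one order_less_le_trans)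
    qed
    have L1: "L \<ge> x (v0+1)" using leL by simp
    have Lpos: "L > 0" using L1 xbig(4)[of "v0+1"] by simp
    have Lrc: "L > - rc" using L1 xbig(3)[of "v0+1"] by simp
    have hl: "((\<lambda>(v, z). h v z) \<longlongrightarrow> hinf L) (at_top \<times>\<^sub>F nhds L)"
      using h_lim[of L 0] Lrc by simp
    have pair: "filterlim (\<lambda>v. (v, x v)) (at_top \<times>\<^sub>F nhds L) at_top"
      by (rule filterlim_Pair[OF filterlim_ident xL])
    have hx: "((\<lambda>v. h v (x v)) \<longlongrightarrow> hinf L) at_top"
      using tendsto_compose_filtermap[of "\<lambda>(v, z). h v z"] filterlim_compose[OF hl pair]
      by simp
    have DL: "(D \<longlongrightarrow> (1/2) * hinf L * (L - 0) * (L - 0)) at_top"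
      unfolding D_def[abs_def] by (intro tendsto_intros hx xL xp_lim xm_lim)
    define c where "c = (1/2) * hinf L * (L - 0) * (L - 0) / 2"
    have c0: "c > 0" unfolding c_def using hinf_pos[OF Lrc] Lpos by simp
    have "c < (1/2) * hinf L * (L - 0) * (L - 0)" using c0 unfolding c_def by linarith
    hence ev: "\<forall>\<^sub>F t in at_top. c < D t" using order_tendstoD(1)[OF DL] by blast
    have "\<forall>\<^sub>F t in at_top. c < D t \<and> t > v0"
      using ev eventually_gt_at_top[of v0] by (rule eventually_conj)
    then obtain v1 where v1: "\<And>t. t \<ge> v1 \<Longrightarrow> c < D t \<and> t > v0"
      unfolding eventually_at_top_linorder by blast
    define T where "T = v1 + (Z - x v1) / c + 1"
    have T: "T > v1" using bnd[of v1] v1[of v1] c0 unfolding T_def by (simp add: field_simps)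
    have "(\<lambda>t. x t - c * t) v1 < (\<lambda>t. x t - c * t) T"
    proof (rule DERIV_pos_imp_increasing[OF T])
      fix t assume "v1 \<le> t" "t \<le> T"
      thus "\<exists>y. ((\<lambda>t. x t - c * t) has_real_derivative y) (at t) \<and> 0 < y"
        using v1[of t] by (intro exI[of _ "D t - c"]) (auto intro!: derivative_eq_intros dx)
    qed
    hence "x T > x v1 + c * (T - v1)" by (simp add: algebra_simps)
    also have "c * (T - v1) = Z - x v1 + c" unfolding T_def using c0 by (simp add: field_simps)
    finally have "x T > Z" using c0 by simp
    thus False using bnd[of T] v1[of v1] T by simp
  qed
  show ?thesis using part1 part2 by simp
qed

end
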